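(* Consider the facility location problem on a random shortest path metric on $n$ vertices in which all opening costs are equal, $f_1=\dots=f_n=f>0$ (with $f$ possibly depending on $n$). Define $\kappa:=\max\{i\in[n]: f_i<1/(i-1)\}=\min\{\lceil 1/f\rceil,n\}$ and assume $\kappa\in\Theta(n)$. Let $\mathsf{ALG}$ denote the total cost of the solution which opens, independently of the metric, $\kappa$ arbitrarily chosen facilities (e.g. facilities $1,\ldots,\kappa$), and let $\mathsf{OPT}$ be the optimal cost. Then $$\mathbb{E}\left[\frac{\mathsf{ALG}}{\mathsf{OPT}}\right]=O(1)+O\left(\sqrt[4]{\ln(n)\,n^3f^3}\right),$$ which for $f\in O\big(1/(n\sqrt[3]{\ln(n)})\big)$ is $O(1)$. Moreover, if $f\in o(1/n^3)$, then $\mathbb{E}[\mathsf{ALG}/\mathsf{OPT}]=1+o(1)$.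
   Context: Random shortest path metric: let $G=(V,E)$ be the complete undirected graph on $n$ vertices; each edge $e$ independently receives a weight $w(e)\sim\mathrm{Exp}(1)$ (exponential distribution with rate $1$), and $d(u,v)$ is the minimum total weight of a $u$-$v$ path in $G$. Facility location: each vertex has opening cost $f$; for nonempty $U\subseteq V$, $c(U)=|U|f+\sum_{v\in V}\min_{u\in U}d(u,v)$, and $\mathsf{OPT}=\min_{\emptyset\ne U\subseteq V}c(U)$. In the definition of $\kappa$, $1/(i-1)$ for $i=1$ is interpreted as $+\infty$. Asymptotic notation refers to $n\to\infty$. *)

theory Defs
  imports "HOL-Probability.Probability" "HOL-Library.Landau_Symbols"
begin

definition edges :: "nat \<Rightarrow> nat set set" where
  "edges n = {{u, v} | u v. u < n \<and> v < n \<and> u \<noteq> v}"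

definition rsp_space :: "nat \<Rightarrow> (nat set \<Rightarrow> real) measure" where
  "rsp_space n = PiM (edges n) (\<lambda>_. density lborel (exponential_density 1))"

definition paths :: "nat \<Rightarrow> nat \<Rightarrow> nat \<Rightarrow> nat list set" where
  "paths n u v = {p. p \<noteq> [] \<and> distinct p \<and> hd p = u \<and> last p = v \<and> set p \<subseteq> {..<n}}"

definition path_weight :: "(nat set \<Rightarrow> real) \<Rightarrow> nat list \<Rightarrow> real" where
  "path_weight w p = sum_list (map (\<lambda>(a, b). w {a, b}) (zip p (tl p)))"

definition spd :: "nat \<Rightarrow> (nat set \<Rightarrow> real) \<Rightarrow> nat \<Rightarrow> nat \<Rightarrow> real" where
  "spd n w u v = Min (path_weight w ` paths n u v)"

definition fl_cost :: "nat \<Rightarrow> real \<Rightarrow> (nat set \<Rightarrow> real) \<Rightarrow> nat set \<Rightarrow> real" where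
  "fl_cost n f w U = real (card U) * f + (\<Sum>v<n. Min ((\<lambda>u. spd n w u v) ` U))"

definition fl_opt :: "nat \<Rightarrow> real \<Rightarrow> (nat set \<Rightarrow> real) \<Rightarrow> real" where
  "fl_opt n f w = Min (fl_cost n f w ` {U. U \<subseteq> {..<n} \<and> U \<noteq> {}})"

definition kappa :: "real \<Rightarrow> nat \<Rightarrow> nat" where
  "kappa f n = min (nat \<lceil>1 / f\<rceil>) n"

definition fl_alg :: "nat \<Rightarrow> real \<Rightarrow> (nat set \<Rightarrow> real) \<Rightarrow> real" where
  "fl_alg n f w = fl_cost n f w {..<kappa f n}"

definition ratio :: "nat \<Rightarrow> real \<Rightarrow> (nat set \<Rightarrow> real) \<Rightarrow> real" where
  "ratio n f w = fl_alg n f w / fl_opt n f w"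

end

theory Submission
  imports Defs
begin


abbreviation Dexp :: "real measure" where
  "Dexp \<equiv> density lborel (\<lambda>x. ennreal (exponential_density 1 x))"

lemma prob_Dexp: "prob_space Dexp"
  by (rule prob_space_exponential_density) simp

lemma sets_Dexp[simp]: "sets Dexp = sets borel"
  by simp

lemma finite_edges: "finite (edges n)"
proof -
  have "edges n \<subseteq> Pow {..<n}" unfolding edges_def by auto
  then show ?thesis by (rule finite_subset) simp
qed

lemma edge_card: "e \<in> edges n \<Longrightarrow> card e = 2"
  unfolding edges_def by auto

lemma prob_M: "prob_space (rsp_space n)"
  unfolding rsp_space_def by (intro prob_space_PiM prob_Dexp)

lemma comp_meas[measurable]: "(\<lambda>w. w e) \<in> borel_measurable (rsp_space n)"
proof (cases "e \<in> edges n")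
  case True
  have "(\<lambda>w. w e) \<in> measurable (rsp_space n) Dexp"
    unfolding rsp_space_def using True by (rule measurable_component_singleton)
  moreover have "measurable (rsp_space n) Dexp = measurable (rsp_space n) borel"
    by (rule measurable_cong_sets) auto
  ultimately show ?thesis by simp
next
  case False
  have "(\<lambda>w. w e) \<in> borel_measurable (rsp_space n) \<longleftrightarrow> (\<lambda>w. undefined :: real) \<in> borel_measurable (rsp_space n)"
    by (rule measurable_cong) (use False in \<open>auto simp: rsp_space_def space_PiM PiE_def extensional_def\<close>)
  then show ?thesis by simp
qed

lemma AE_nonneg: "AE w in rsp_space n. \<forall>e\<in>edges n. 0 \<le> w e"
proof (rule AE_finite_allI[OF finite_edges])
  fix e assume e: "e \<in> edges n"
  have "AE x in Dexp. 0 \<le> x"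
    by (subst AE_density) (auto simp: exponential_density_def)
  then show "AE w in rsp_space n. 0 \<le> w e"
    unfolding rsp_space_def by (rule AE_PiM_component[OF prob_Dexp e])
qed

lemma distr_comp: "e \<in> edges n \<Longrightarrow> distr (rsp_space n) borel (\<lambda>w. w e) = Dexp"
proof -
  assume e: "e \<in> edges n"
  have "distr (rsp_space n) borel (\<lambda>w. w e) = distr (rsp_space n) Dexp (\<lambda>w. w e)"
    by (rule distr_cong) auto
  also have "\<dots> = Dexp" unfolding rsp_space_def by (rule distr_PiM_component[OF prob_Dexp e])
  finally show ?thesis .
qed

lemma distributed_comp: assumes e: "e \<in> edges n" shows "
   distributed (rsp_space n) lborel (\<lambda>w. w e) (\<lambda>x. ennreal (exponential_density 1 x))"
  unfolding distributed_def
proof (intro conjI)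
  have "distr (rsp_space n) lborel (\<lambda>w. w e) = distr (rsp_space n) borel (\<lambda>w. w e)"
    by (rule distr_cong) auto
  then show "distr (rsp_space n) lborel (\<lambda>w. w e) = Dexp" using distr_comp[OF e] by simp
  show "(\<lambda>x. ennreal (exponential_density 1 x)) \<in> borel_measurable lborel" by simp
  show "(\<lambda>w. w e) \<in> measurable (rsp_space n) lborel" by simp
qed

lemma indep_comp: assumes ne: "edges n \<noteq> {}"
  shows "prob_space.indep_vars (rsp_space n) (\<lambda>_. borel) (\<lambda>e w. w e) (edges n)"
proof -
  have rv: "\<And>i. (\<lambda>w. w i) \<in> measurable (rsp_space n) borel" by simp
  have e1: "distr (rsp_space n) (Pi\<^sub>M (edges n) (\<lambda>i. borel)) (\<lambda>x. \<lambda>i\<in>edges n. x i)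
        = distr (rsp_space n) (Pi\<^sub>M (edges n) (\<lambda>i. borel)) (\<lambda>x. x)"
    by (rule distr_cong) (auto simp: rsp_space_def space_PiM)
  have e2: "distr (rsp_space n) (Pi\<^sub>M (edges n) (\<lambda>i. borel)) (\<lambda>x. x) = rsp_space n"
    by (rule distr_id2) (unfold rsp_space_def, rule sets_PiM_cong, auto)
  have e3: "Pi\<^sub>M (edges n) (\<lambda>i. distr (rsp_space n) borel (\<lambda>w. w i)) = Pi\<^sub>M (edges n) (\<lambda>_. Dexp)"
    by (rule PiM_cong[OF refl]) (rule distr_comp)
  have eq: "distr (rsp_space n) (Pi\<^sub>M (edges n) (\<lambda>i. borel)) (\<lambda>x. \<lambda>i\<in>edges n. x i)
     = Pi\<^sub>M (edges n) (\<lambda>i. distr (rsp_space n) borel (\<lambda>w. w i))"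
    unfolding e1 e2 e3 by (simp add: rsp_space_def)
  show ?thesis
    using prob_space.indep_vars_iff_distr_eq_PiM[where M'="\<lambda>_. borel" and X="\<lambda>e w. w e", OF prob_M ne] rv eq
    by blast
qed


lemma pw_meas_list: "(\<lambda>w. sum_list (map (\<lambda>(a,b). w {a,b}) xs)) \<in> borel_measurable (rsp_space n)"
proof (induction xs)
  case Nil then show ?case by simp
next
  case (Cons x xs)
  obtain a b where x: "x = (a,b)" by (cases x)
  show ?case using Cons by (simp add: x)
qed

lemma pw_meas: "(\<lambda>w. path_weight w p) \<in> borel_measurable (rsp_space n)"
  unfolding path_weight_def by (rule pw_meas_list)

lemma finite_paths: "finite (paths n u v)"
proof -
  have "paths n u v \<subseteq> {xs. set xs \<subseteq> {..<n} \<and> length xs \<le> n}"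
  proof
    fix p assume p: "p \<in> paths n u v"
    then have "set p \<subseteq> {..<n}" "distinct p" by (auto simp: paths_def)
    have "length p = card (set p)" using \<open>distinct p\<close> by (simp add: distinct_card)
    also have "\<dots> \<le> card {..<n}" by (rule card_mono) (use \<open>set p \<subseteq> {..<n}\<close> in auto)
    finally have "length p \<le> n" by simp
    then show "p \<in> {xs. set xs \<subseteq> {..<n} \<and> length xs \<le> n}" using \<open>set p \<subseteq> {..<n}\<close> by simp
  qed
  then show ?thesis by (rule finite_subset) (rule finite_lists_length_le, simp)
qed

lemma spd_meas: "(\<lambda>w. spd n w u v) \<in> borel_measurable (rsp_space n)"
  unfolding spd_def by (rule borel_measurable_Min[OF finite_paths pw_meas])

lemma cost_meas: "finite U \<Longrightarrow> (\<lambda>w. fl_cost n f w U) \<in> borel_measurable (rsp_space n)"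
  unfolding fl_cost_def
  by (intro borel_measurable_add borel_measurable_const borel_measurable_sum borel_measurable_Min spd_meas)

lemma finite_Us: "finite {U. U \<subseteq> {..<(n::nat)} \<and> U \<noteq> {}}"
  by (rule finite_subset[of _ "Pow {..<n}"]) (auto simp: finite_Pow_iff)

lemma opt_meas: "(\<lambda>w. fl_opt n f w) \<in> borel_measurable (rsp_space n)"
  unfolding fl_opt_def
  by (rule borel_measurable_Min[OF finite_Us cost_meas]) (auto intro: finite_subset)

lemma alg_meas: "(\<lambda>w. fl_alg n f w) \<in> borel_measurable (rsp_space n)"
  unfolding fl_alg_def by (rule cost_meas) simp

lemma ratio_meas: "ratio n f \<in> borel_measurable (rsp_space n)"
proof -
  have "(\<lambda>w. fl_alg n f w / fl_opt n f w) \<in> borel_measurable (rsp_space n)"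
    by (intro borel_measurable_divide alg_meas opt_meas)
  then show ?thesis unfolding ratio_def[abs_def] .
qed

subsection \<open>Deterministic facts about paths\<close>

lemma edge_in: "a \<noteq> b \<Longrightarrow> a < n \<Longrightarrow> b < n \<Longrightarrow> {a,b} \<in> edges n"
  unfolding edges_def by auto

lemma zip_tl_mem:
  assumes "(a,b) \<in> set (zip p (tl p))" "distinct p"
  shows "a \<noteq> b \<and> a \<in> set p \<and> b \<in> set p"
proof -
  obtain i where i: "i < length p" "i < length (tl p)" "p!i = a" "tl p ! i = b"
    using assms(1) by (auto simp: in_set_zip)
  then have b: "b = p ! Suc i" by (cases p) auto
  have "Suc i < length p" using i by simp
  then show ?thesis using i b assms(2) by (auto simp: nth_eq_iff_index_eq)
qed

lemma zip_tl_last: "(a,b) \<in> set (zip (ys @ [a,b]) (tl (ys @ [a,b])))"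
proof (induction ys)
  case Nil then show ?case by simp
next
  case (Cons y ys)
  obtain c r where cr: "ys @ [a,b] = c # r" by (cases "ys @ [a,b]") auto
  show ?case using Cons by (simp add: cr)
qed

lemma pw_nonneg:
  assumes nn: "\<forall>e\<in>edges n. 0 \<le> w e" and p: "p \<in> paths n u v"
  shows "0 \<le> path_weight w p"
  unfolding path_weight_def
proof (rule sum_list_nonneg)
  fix x assume "x \<in> set (map (\<lambda>(a, b). w {a, b}) (zip p (tl p)))"
  then obtain a b where ab: "(a,b) \<in> set (zip p (tl p))" "x = w {a,b}" by auto
  have "distinct p" "set p \<subseteq> {..<n}" using p by (auto simp: paths_def)
  then have "{a,b} \<in> edges n" using zip_tl_mem[OF ab(1)] by (intro edge_in) auto
  then show "0 \<le> x" using nn ab by auto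
qed

lemma pw_last:
  assumes nn: "\<forall>e\<in>edges n. 0 \<le> w e" and p: "p \<in> paths n u v" and uv: "u \<noteq> v"
  shows "\<exists>a. a < n \<and> a \<noteq> v \<and> w {a,v} \<le> path_weight w p"
proof -
  have pne: "p \<noteq> []" and d: "distinct p" and hd: "hd p = u" and lst: "last p = v"
    and sub: "set p \<subseteq> {..<n}" using p by (auto simp: paths_def)
  have bne: "butlast p \<noteq> []"
  proof
    assume "butlast p = []"
    then have "p = [last p]" using append_butlast_last_id[OF pne] by simp
    then obtain x where "p = [x]" by blast
    then show False using hd lst uv by simp
  qed
  define ys where "ys = butlast (butlast p)"
  define a where "a = last (butlast p)"
  have peq: "p = ys @ [a, v]"
  proof -
    have 1: "butlast p @ [last p] = p" by (rule append_butlast_last_id[OF pne])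
    have 2: "butlast (butlast p) @ [last (butlast p)] = butlast p" by (rule append_butlast_last_id[OF bne])
    have "ys @ [a, v] = (butlast (butlast p) @ [last (butlast p)]) @ [last p]"
      unfolding ys_def a_def using lst by simp
    also have "\<dots> = p" unfolding 2 1 ..
    finally show ?thesis by simp
  qed
  have ab: "(a, v) \<in> set (zip p (tl p))" using zip_tl_last[of a v ys] peq by simp
  then have anv: "a \<noteq> v" "a \<in> set p" using zip_tl_mem[OF ab d] by auto
  have "w {a,v} \<in> set (map (\<lambda>(a, b). w {a, b}) (zip p (tl p)))" using ab by force
  moreover have "\<And>x. x \<in> set (map (\<lambda>(a, b). w {a, b}) (zip p (tl p))) \<Longrightarrow> 0 \<le> x"
  proof -
    fix x assume "x \<in> set (map (\<lambda>(a, b). w {a, b}) (zip p (tl p)))"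
    then obtain a' b' where ab': "(a',b') \<in> set (zip p (tl p))" "x = w {a',b'}" by auto
    then have "{a',b'} \<in> edges n" using zip_tl_mem[OF ab'(1) d] sub by (intro edge_in) auto
    then show "0 \<le> x" using nn ab' by auto
  qed
  ultimately have "w {a,v} \<le> path_weight w p"
    unfolding path_weight_def by (rule member_le_sum_list)
  then show ?thesis using anv sub by auto
qed

lemma path_uv: "u < n \<Longrightarrow> v < n \<Longrightarrow> u \<noteq> v \<Longrightarrow> [u,v] \<in> paths n u v"
  unfolding paths_def by auto

lemma path_vv: "v < n \<Longrightarrow> [v] \<in> paths n v v"
  unfolding paths_def by auto

lemma paths_ne: "u < n \<Longrightarrow> v < n \<Longrightarrow> paths n u v \<noteq> {}"
  using path_uv path_vv by (cases "u = v") blast+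

lemma spd_le_edge: "u < n \<Longrightarrow> v < n \<Longrightarrow> u \<noteq> v \<Longrightarrow> spd n w u v \<le> w {u,v}"
proof -
  assume "u < n" "v < n" "u \<noteq> v"
  then have "spd n w u v \<le> path_weight w [u,v]"
    unfolding spd_def using path_uv finite_paths by (intro Min_le) auto
  then show ?thesis by (simp add: path_weight_def)
qed

lemma spd_self_le: "v < n \<Longrightarrow> spd n w v v \<le> 0"
proof -
  assume "v < n"
  then have "spd n w v v \<le> path_weight w [v]"
    unfolding spd_def using path_vv finite_paths by (intro Min_le) auto
  then show ?thesis by (simp add: path_weight_def)
qed

lemma spd_nonneg: "\<forall>e\<in>edges n. 0 \<le> w e \<Longrightarrow> u < n \<Longrightarrow> v < n \<Longrightarrow> 0 \<le> spd n w u v"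
  unfolding spd_def using finite_paths paths_ne pw_nonneg
  by (subst Min_ge_iff) auto

lemma spd_ge_last:
  assumes nn: "\<forall>e\<in>edges n. 0 \<le> w e" and u: "u < n" and v: "v < n" and uv: "u \<noteq> v"
    and t: "\<And>a. a < n \<Longrightarrow> a \<noteq> v \<Longrightarrow> t \<le> w {a,v}"
  shows "t \<le> spd n w u v"
  unfolding spd_def
proof (subst Min_ge_iff)
  show "finite (path_weight w ` paths n u v)" using finite_paths by simp
  show "path_weight w ` paths n u v \<noteq> {}" using paths_ne u v by simp
  show "\<forall>a\<in>path_weight w ` paths n u v. t \<le> a"
  proof
    fix x assume "x \<in> path_weight w ` paths n u v"
    then obtain p where p: "p \<in> paths n u v" "x = path_weight w p" by auto
    obtain a where "a < n" "a \<noteq> v" "w {a,v} \<le> path_weight w p" using pw_last[OF nn p(1) uv] by auto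
    then show "t \<le> x" using t p by fastforce
  qed
qed


lemma kappa_ge1: "0 < f \<Longrightarrow> 1 \<le> n \<Longrightarrow> 1 \<le> kappa f n"
proof -
  assume f: "0 < f" and n: "1 \<le> n"
  have "1 \<le> \<lceil>1/f\<rceil>" using f by simp
  then have "1 \<le> nat \<lceil>1/f\<rceil>" by linarith
  then show ?thesis unfolding kappa_def using n by simp
qed

lemma kappa_le: "kappa f n \<le> n"
  unfolding kappa_def by simp

lemma kappa_f: assumes f: "0 < f" shows "f * (real (kappa f n) - 1) < 1"
proof -
  have "real (kappa f n) \<le> real (nat \<lceil>1/f\<rceil>)" unfolding kappa_def by simp
  also have "\<dots> < 1/f + 1"
  proof -
    have "0 < 1/f" using f by simp
    then have c0: "0 \<le> \<lceil>1/f\<rceil>" using ceiling_correct[of "1/f"] by linarith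
    then have "real (nat \<lceil>1/f\<rceil>) = real_of_int \<lceil>1/f\<rceil>" by simp
    then show ?thesis using ceiling_correct[of "1/f"] by linarith
  qed
  finally have "real (kappa f n) - 1 < 1/f" by simp
  then have "f * (real (kappa f n) - 1) < f * (1/f)" using f by (intro mult_strict_left_mono) auto
  then show ?thesis using f by simp
qed

lemma kappa_lt: assumes f: "0 < f" and k: "kappa f n < n" shows "1 \<le> real (kappa f n) * f"
proof -
  have "kappa f n = nat \<lceil>1/f\<rceil>" using k unfolding kappa_def by simp
  then have "1/f \<le> real (kappa f n)" by linarith
  then show ?thesis using f by (simp add: field_simps)
qed

lemma kappa_small: assumes f: "0 < f" and fn: "f * real n < 1" shows "kappa f n = n"
proof -
  have "real n < 1/f" using f fn by (simp add: field_simps)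
  then have "n \<le> nat \<lceil>1/f\<rceil>" by linarith
  then show ?thesis unfolding kappa_def by simp
qed

subsection \<open>Deterministic bounds on costs\<close>

lemma opt_le_cost: "1 \<le> n \<Longrightarrow> U \<subseteq> {..<n} \<Longrightarrow> U \<noteq> {} \<Longrightarrow> fl_opt n f w \<le> fl_cost n f w U"
  unfolding fl_opt_def by (rule Min_le) (use finite_Us in auto)

lemma opt_le_alg: "1 \<le> kappa f n \<Longrightarrow> 1 \<le> n \<Longrightarrow> fl_opt n f w \<le> fl_alg n f w"
  unfolding fl_alg_def using kappa_le[of f n]
  by (intro opt_le_cost) (auto simp: lessThan_empty_iff)

lemma opt_ge: assumes "1 \<le> n" "\<And>U. U \<subseteq> {..<n} \<Longrightarrow> U \<noteq> {} \<Longrightarrow> t \<le> fl_cost n f w U"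
  shows "t \<le> fl_opt n f w"
  unfolding fl_opt_def
proof (subst Min_ge_iff)
  show "finite (fl_cost n f w ` {U. U \<subseteq> {..<n} \<and> U \<noteq> {}})" using finite_Us by simp
  have "{..<n} \<in> {U. U \<subseteq> {..<n} \<and> U \<noteq> {}}" using assms(1) by (auto simp: lessThan_empty_iff)
  then show "fl_cost n f w ` {U. U \<subseteq> {..<n} \<and> U \<noteq> {}} \<noteq> {}" by blast
  show "\<forall>a\<in>fl_cost n f w ` {U. U \<subseteq> {..<n} \<and> U \<noteq> {}}. t \<le> a" using assms(2) by auto
qed

lemma minspd_nonneg:
  assumes nn: "\<forall>e\<in>edges n. 0 \<le> w e" and U: "U \<subseteq> {..<n}" "U \<noteq> {}" and v: "v < n"
  shows "0 \<le> Min ((\<lambda>u. spd n w u v) ` U)"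
proof (subst Min_ge_iff)
  show "finite ((\<lambda>u. spd n w u v) ` U)" using U by (auto intro: finite_subset)
  show "(\<lambda>u. spd n w u v) ` U \<noteq> {}" using U by auto
  show "\<forall>a\<in>(\<lambda>u. spd n w u v) ` U. 0 \<le> a" using spd_nonneg[OF nn] U v by auto
qed

lemma cost_ge_f:
  assumes nn: "\<forall>e\<in>edges n. 0 \<le> w e" and U: "U \<subseteq> {..<n}" "U \<noteq> {}" and f: "0 < f"
  shows "f \<le> fl_cost n f w U"
proof -
  have "finite U" using U by (auto intro: finite_subset)
  then have "1 \<le> card U" using U by (simp add: Suc_le_eq card_gt_0_iff)
  then have "f \<le> real (card U) * f" using f by simp
  moreover have "0 \<le> (\<Sum>v<n. Min ((\<lambda>u. spd n w u v) ` U))"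
    using minspd_nonneg[OF nn U] by (intro sum_nonneg) auto
  ultimately show ?thesis unfolding fl_cost_def by simp
qed

lemma cost_ge_G:
  assumes nn: "\<forall>e\<in>edges n. 0 \<le> w e" and U: "U \<subseteq> {..<n}" "U \<noteq> {}" and f: "0 < f"
    and eps: "0 < \<epsilon>" "\<epsilon> \<le> 1"
  shows "\<epsilon> * f * real (card {v. v < n \<and> (\<forall>a<n. a \<noteq> v \<longrightarrow> \<epsilon> * f \<le> w {a,v})}) \<le> fl_cost n f w U"
proof -
  define G where "G = {v. v < n \<and> (\<forall>a<n. a \<noteq> v \<longrightarrow> \<epsilon> * f \<le> w {a,v})}"
  define m where "m v = Min ((\<lambda>u. spd n w u v) ` U)" for v
  have finU: "finite U" using U by (auto intro: finite_subset)
  have finG: "finite G" unfolding G_def by simp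
  have m0: "\<And>v. v < n \<Longrightarrow> 0 \<le> m v" unfolding m_def using minspd_nonneg[OF nn U] by auto
  have mG: "\<epsilon> * f \<le> m v" if v: "v \<in> G - U" for v
    unfolding m_def
  proof (subst Min_ge_iff)
    show "finite ((\<lambda>u. spd n w u v) ` U)" using finU by simp
    show "(\<lambda>u. spd n w u v) ` U \<noteq> {}" using U by auto
    show "\<forall>a\<in>(\<lambda>u. spd n w u v) ` U. \<epsilon> * f \<le> a"
    proof
      fix x assume "x \<in> (\<lambda>u. spd n w u v) ` U"
      then obtain u where u: "u \<in> U" "x = spd n w u v" by auto
      have "u \<noteq> v" using u v by auto
      have "v < n" using v unfolding G_def by auto
      show "\<epsilon> * f \<le> x" unfolding u(2)
        by (rule spd_ge_last[OF nn _ \<open>v < n\<close> \<open>u \<noteq> v\<close>]) (use u U v in \<open>auto simp: G_def\<close>)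
    qed
  qed
  have "(\<Sum>v\<in>G - U. \<epsilon> * f) \<le> (\<Sum>v\<in>G - U. m v)" using mG by (rule sum_mono)
  also have "\<dots> \<le> (\<Sum>v<n. m v)"
    by (rule sum_mono2) (use m0 in \<open>auto simp: G_def\<close>)
  finally have s1: "\<epsilon> * f * real (card (G - U)) \<le> (\<Sum>v<n. m v)" by (simp add: mult.commute)
  have "card (G \<inter> U) \<le> card U" using finU by (intro card_mono) auto
  then have "\<epsilon> * f * real (card (G \<inter> U)) \<le> f * real (card U)"
    using f eps by (intro mult_mono) (auto simp: mult_le_cancel_right1)
  moreover have "card G = card (G \<inter> U) + card (G - U)"
    using finG by (rule card_Int_Diff)
  ultimately have "\<epsilon> * f * real (card G) \<le> real (card U) * f + (\<Sum>v<n. m v)"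
    using s1 by (simp add: algebra_simps)
  then show ?thesis unfolding fl_cost_def m_def G_def .
qed

lemma card_bad:
  fixes t :: real
  shows "real n - 2 * real (card {e\<in>edges n. w e < t}) \<le> real (card {v. v < n \<and> (\<forall>a<n. a \<noteq> v \<longrightarrow> t \<le> w {a,v})})"
proof -
  define G where "G = {v. v < n \<and> (\<forall>a<n. a \<noteq> v \<longrightarrow> t \<le> w {a,v})}"
  define B where "B = {v. v < n \<and> \<not> (\<forall>a<n. a \<noteq> v \<longrightarrow> t \<le> w {a,v})}"
  define L where "L = {e\<in>edges n. w e < t}"
  have finL: "finite L" unfolding L_def using finite_edges by simp
  have "B \<subseteq> \<Union>L"
  proof
    fix v assume "v \<in> B"
    then have vn: "v < n" and nv: "\<not> (\<forall>a<n. a \<noteq> v \<longrightarrow> t \<le> w {a,v})" unfolding B_def by auto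
    then obtain a where a0: "a < n" "a \<noteq> v" "\<not> t \<le> w {a,v}" by blast
    then have a: "a < n" "a \<noteq> v" "w {a,v} < t" "v < n" using vn by auto
    then have "{a,v} \<in> L" unfolding L_def using edge_in by auto
    then show "v \<in> \<Union>L" by blast
  qed
  then have "card B \<le> card (\<Union>L)"
    using finL finite_edges by (intro card_mono) (auto simp: L_def edges_def)
  also have "\<dots> \<le> sum card L" by (rule card_Union_le_sum_card)
  also have "\<dots> = sum (\<lambda>_. 2) L" using edge_card by (intro sum.cong) (auto simp: L_def)
  finally have cB: "card B \<le> 2 * card L" by simp
  have "{..<n} \<subseteq> G \<union> B" unfolding G_def B_def by auto
  moreover have "finite (G \<union> B)" unfolding G_def B_def by simp
  ultimately have "card {..<n} \<le> card (G \<union> B)" by (intro card_mono)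
  then have "n \<le> card (G \<union> B)" by simp
  also have "\<dots> \<le> card G + card B" by (rule card_Un_le)
  finally have "n \<le> card G + 2 * card L" using cB by linarith
  then show ?thesis unfolding G_def L_def by linarith
qed

lemma alg_le:
  assumes k: "1 \<le> kappa f n"
  shows "fl_alg n f w \<le> real (kappa f n) * f + (\<Sum>v\<in>{kappa f n..<n}. Min ((\<lambda>u. w {u,v}) ` {..<kappa f n}))"
proof -
  define k where "k = kappa f n"
  have kn: "k \<le> n" unfolding k_def by (rule kappa_le)
  have split: "{..<n} = {..<k} \<union> {k..<n}" using kn by auto
  have a: "(\<Sum>v<n. Min ((\<lambda>u. spd n w u v) ` {..<k})) =
    (\<Sum>v<k. Min ((\<lambda>u. spd n w u v) ` {..<k})) + (\<Sum>v\<in>{k..<n}. Min ((\<lambda>u. spd n w u v) ` {..<k}))"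
    unfolding split by (rule sum.union_disjoint) auto
  have b: "(\<Sum>v<k. Min ((\<lambda>u. spd n w u v) ` {..<k})) \<le> 0"
  proof (rule sum_nonpos)
    fix v assume v: "v \<in> {..<k}"
    then have "Min ((\<lambda>u. spd n w u v) ` {..<k}) \<le> spd n w v v" by (intro Min_le) auto
    also have "\<dots> \<le> 0" using v kn by (intro spd_self_le) auto
    finally show "Min ((\<lambda>u. spd n w u v) ` {..<k}) \<le> 0" .
  qed
  have c: "Min ((\<lambda>u. spd n w u v) ` {..<k}) \<le> Min ((\<lambda>u. w {u,v}) ` {..<k})" if v: "v \<in> {k..<n}" for v
  proof -
    obtain u where u: "u \<in> {..<k}" "w {u,v} = Min ((\<lambda>u. w {u,v}) ` {..<k})"
    proof -
      have "Min ((\<lambda>u. w {u,v}) ` {..<k}) \<in> (\<lambda>u. w {u,v}) ` {..<k}"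
        using k by (intro Min_in) (auto simp: k_def lessThan_empty_iff)
      then show ?thesis using that by auto
    qed
    have "Min ((\<lambda>u. spd n w u v) ` {..<k}) \<le> spd n w u v" using u by (intro Min_le) auto
    also have "\<dots> \<le> w {u,v}" using u v kn by (intro spd_le_edge) auto
    finally show ?thesis using u by simp
  qed
  have "fl_alg n f w = real k * f + (\<Sum>v<n. Min ((\<lambda>u. spd n w u v) ` {..<k}))"
    unfolding fl_alg_def fl_cost_def k_def by simp
  also have "\<dots> \<le> real k * f + (\<Sum>v\<in>{k..<n}. Min ((\<lambda>u. w {u,v}) ` {..<k}))"
  proof -
    have d: "(\<Sum>v\<in>{k..<n}. Min ((\<lambda>u. spd n w u v) ` {..<k})) \<le> (\<Sum>v\<in>{k..<n}. Min ((\<lambda>u. w {u,v}) ` {..<k}))"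
      by (rule sum_mono) (rule c)
    show ?thesis using a b d by linarith
  qed
  finally show ?thesis unfolding k_def .
qed

lemma min_le0: fixes k v :: nat assumes k: "1 \<le> k" shows "Min ((\<lambda>u. w {u,v}) ` {..<k}) \<le> (w {0,v} :: real)"
proof -
  have "w {0,v} \<in> (\<lambda>u. w {u,v}) ` {..<k}" using k by (intro image_eqI[of _ _ 0]) auto
  then show ?thesis by (intro Min_le) auto
qed




lemma exp_min_integral:
  assumes k: "1 \<le> k" and v: "k \<le> v" "v < n"
  shows "has_bochner_integral (rsp_space n) (\<lambda>w. Min ((\<lambda>u. w {u,v}) ` {..<k})) (1 / real k)"
proof -
  interpret prob_space "rsp_space n" by (rule prob_M)
  define I where "I = (\<lambda>u. {u,v}) ` {..<k}"
  have IE: "I \<subseteq> edges n" unfolding I_def using v by (auto intro!: edge_in)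
  have finI: "finite I" unfolding I_def by simp
  have Ine: "I \<noteq> {}" unfolding I_def using k by (auto simp: lessThan_empty_iff)
  have inj: "inj_on (\<lambda>u. {u,v}) {..<k}" using v by (auto simp: inj_on_def doubleton_eq_iff)
  have cI: "card I = k" unfolding I_def using inj by (simp add: card_image)
  have ind: "indep_vars (\<lambda>_. borel) (\<lambda>e w. w e) I"
    using indep_vars_subset[OF indep_comp IE] IE Ine by auto
  have D: "distributed (rsp_space n) lborel (\<lambda>x. Min ((\<lambda>i. x i) ` I)) (exponential_density (\<Sum>i\<in>I. 1))"
    by (rule exponential_distributed_Min[OF finI Ine _ _ ind]) (use IE distributed_comp in auto)
  have D': "distributed (rsp_space n) lborel (\<lambda>x. Min ((\<lambda>i. x i) ` I)) (erlang_density 0 (real k))"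
    using D cI by simp
  have "has_bochner_integral (rsp_space n) (\<lambda>x. Min ((\<lambda>i. x i) ` I) ^ 1) (fact (0 + 1) / (fact 0 * real k ^ 1))"
    by (rule has_bochner_integral_erlang_ith_moment[OF _ D']) (use k in simp)
  moreover have "\<And>x :: nat set \<Rightarrow> real. Min ((\<lambda>i. x i) ` I ) ^ 1 = Min ((\<lambda>u. x {u,v}) ` {..<k})"
    unfolding I_def by (simp add: image_image)
  moreover have "fact (0 + 1) / (fact 0 * real k ^ 1) = 1 / real k" by simp
  ultimately show ?thesis using has_bochner_integral_cong by (metis (no_types, lifting))
qed

lemma exp_comp_integral:
  assumes e: "e \<in> edges n"
  shows "has_bochner_integral (rsp_space n) (\<lambda>w. w e) 1"
proof -
  interpret prob_space "rsp_space n" by (rule prob_M)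
  have "has_bochner_integral (rsp_space n) (\<lambda>x. x e ^ 1) (fact (0 + 1) / (fact 0 * 1 ^ 1))"
    by (rule has_bochner_integral_erlang_ith_moment[OF _ distributed_comp[OF e]]) simp
  then show ?thesis by simp
qed

lemma exp_ind_eq: "exp (indicator A x :: real) = 1 + (exp 1 - 1) * indicator A x"
  by (cases "x \<in> A") auto

lemma exp_ind_integral:
  assumes e: "e \<in> edges n" and a: "0 \<le> a"
  shows "integrable (rsp_space n) (\<lambda>w. exp (indicator {..<a} (w e) :: real))"
    and "integral\<^sup>L (rsp_space n) (\<lambda>w. exp (indicator {..<a} (w e) :: real)) \<le> exp (2 * a)"
    and "0 \<le> integral\<^sup>L (rsp_space n) (\<lambda>w. exp (indicator {..<a} (w e) :: real))"
proof -
  interpret prob_space "rsp_space n" by (rule prob_M)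
  let ?M = "rsp_space n"
  define A where "A = {w \<in> space ?M. w e < a}"
  have Ameas: "A \<in> sets ?M" unfolding A_def by measurable
  have ind: "\<And>w. w \<in> space ?M \<Longrightarrow> indicator {..<a} (w e) = (indicator A w :: real)"
    unfolding A_def by (auto simp: indicator_def)
  have eq: "exp (indicator {..<a} (w e) :: real) = 1 + (exp 1 - 1) * indicator A w" if "w \<in> space ?M" for w
    using ind[OF that] exp_ind_eq[of "{..<a}" "w e"] by simp
  have intA: "integrable ?M (\<lambda>w. 1 + (exp 1 - 1) * (indicator A w :: real))"
  proof (rule integrable_const_bound[where B="exp 1"])
    show "AE w in ?M. norm (1 + (exp 1 - 1) * (indicator A w :: real)) \<le> exp 1"
      by (auto simp: indicator_def)
    show "(\<lambda>w. 1 + (exp 1 - 1) * (indicator A w :: real)) \<in> borel_measurable ?M"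
      using Ameas by measurable
  qed
  show int: "integrable ?M (\<lambda>w. exp (indicator {..<a} (w e) :: real))"
  proof (rule integrable_const_bound[where B="exp 1"])
    show "AE w in ?M. norm (exp (indicator {..<a} (w e) :: real)) \<le> exp 1"
      by (auto simp: indicator_def)
    show "(\<lambda>w. exp (indicator {..<a} (w e) :: real)) \<in> borel_measurable ?M"
      by measurable
  qed
  have "integral\<^sup>L ?M (\<lambda>w. exp (indicator {..<a} (w e) :: real)) =
      integral\<^sup>L ?M (\<lambda>w. 1 + (exp 1 - 1) * (indicator A w :: real))"
    using eq by (intro Bochner_Integration.integral_cong) auto
  also have "\<dots> = 1 + (exp 1 - 1) * prob A"
  proof -
    have i1: "integrable ?M (\<lambda>w. (1::real))" by simp
    have i2: "integrable ?M (\<lambda>w. (exp 1 - 1) * (indicator A w :: real))"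
      using Ameas by (intro Bochner_Integration.integrable_mult_right integrable_real_indicator) (auto simp: less_top[symmetric])
    have "integral\<^sup>L ?M (\<lambda>w. 1 + (exp 1 - 1) * (indicator A w :: real)) =
       integral\<^sup>L ?M (\<lambda>w. (1::real)) + integral\<^sup>L ?M (\<lambda>w. (exp 1 - 1) * (indicator A w :: real))"
      by (rule Bochner_Integration.integral_add[OF i1 i2])
    also have "\<dots> = 1 + (exp 1 - 1) * integral\<^sup>L ?M (indicator A :: _ \<Rightarrow> real)"
      by (simp add: prob_space)
    also have "integral\<^sup>L ?M (indicator A :: _ \<Rightarrow> real) = prob A"
      using Ameas by (simp add: Int_absorb2 sets.sets_into_space)
    finally show ?thesis .
  qed
  finally have I: "integral\<^sup>L ?M (\<lambda>w. exp (indicator {..<a} (w e) :: real)) = 1 + (exp 1 - 1) * prob A" .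
  have "prob A \<le> prob {w \<in> space ?M. w e \<le> a}"
    unfolding A_def by (intro finite_measure_mono) auto
  also have "\<dots> = 1 - exp (- a * 1)"
    by (rule exponential_distributedD_le[OF distributed_comp[OF e] a]) simp
  also have "\<dots> \<le> a" using exp_ge_add_one_self[of "-a"] by simp
  finally have pA: "prob A \<le> a" .
  have e1: "(0::real) \<le> exp 1 - 1" "exp 1 - 1 \<le> (2::real)"
  proof -
    have "2 \<le> exp (1::real)" using exp_ge_add_one_self[of 1] by simp
    moreover have "exp (1::real) \<le> 3" by (rule exp_le)
    ultimately show "(0::real) \<le> exp 1 - 1" "exp 1 - 1 \<le> (2::real)" by auto
  qed
  have "1 + (exp 1 - 1) * prob A \<le> 1 + 2 * a"
  proof -
    have "(exp 1 - 1) * prob A \<le> 2 * a"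
      by (rule mult_mono) (use pA e1 in auto)
    then show ?thesis by simp
  qed
  also have "\<dots> \<le> exp (2 * a)" using exp_ge_add_one_self[of "2*a"] by simp
  finally show "integral\<^sup>L ?M (\<lambda>w. exp (indicator {..<a} (w e) :: real)) \<le> exp (2 * a)" using I by simp
  show "0 \<le> integral\<^sup>L ?M (\<lambda>w. exp (indicator {..<a} (w e) :: real))"
    using I e1 by simp
qed

lemma prod_indep:
  assumes ne: "edges n \<noteq> {}" and meas: "\<And>e. g e \<in> borel_measurable borel"
    and int: "\<And>e. e \<in> edges n \<Longrightarrow> integrable (rsp_space n) (\<lambda>w. g e (w e) :: real)"
  shows "integrable (rsp_space n) (\<lambda>w. \<Prod>e\<in>edges n. g e (w e))"
    and "integral\<^sup>L (rsp_space n) (\<lambda>w. \<Prod>e\<in>edges n. g e (w e)) = (\<Prod>e\<in>edges n. integral\<^sup>L (rsp_space n) (\<lambda>w. g e (w e)))"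
proof -
  interpret prob_space "rsp_space n" by (rule prob_M)
  have ind: "indep_vars (\<lambda>_. borel) (\<lambda>e w. g e (w e)) (edges n)"
    by (rule indep_vars_compose2[OF indep_comp[OF ne]]) (rule meas)
  show "integrable (rsp_space n) (\<lambda>w. \<Prod>e\<in>edges n. g e (w e))"
    by (rule indep_vars_integrable[OF finite_edges ind int])
  show "integral\<^sup>L (rsp_space n) (\<lambda>w. \<Prod>e\<in>edges n. g e (w e)) = (\<Prod>e\<in>edges n. integral\<^sup>L (rsp_space n) (\<lambda>w. g e (w e)))"
    by (rule indep_vars_lebesgue_integral[OF finite_edges ind int])
qed


lemma card_edges_le: "card (edges n) \<le> n * n"
proof -
  have "edges n \<subseteq> (\<lambda>(u,v). {u,v}) ` ({..<n} \<times> {..<n})" unfolding edges_def by auto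
  then have "card (edges n) \<le> card ((\<lambda>(u,v). {u,v}) ` ({..<n} \<times> {..<n}))"
    by (intro card_mono) auto
  also have "\<dots> \<le> card ({..<n} \<times> {..<n})" by (rule card_image_le) simp
  finally show ?thesis by (simp add: card_cartesian_product)
qed

lemma Y_eq:
  "(\<Prod>e\<in>edges n. exp (indicator {..<a} (w e) :: real)) = exp (real (card {e\<in>edges n. w e < a}))"
proof -
  have "(\<Prod>e\<in>edges n. exp (indicator {..<a} (w e) :: real)) = exp (\<Sum>e\<in>edges n. indicator {..<a} (w e))"
    by (rule exp_sum[OF finite_edges, symmetric])
  also have "(\<Sum>e\<in>edges n. indicator {..<a} (w e) :: real) = (\<Sum>e\<in>edges n. indicator {e. w e < a} e)"
    by (intro sum.cong) (auto simp: indicator_def)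
  also have "\<dots> = real (card (edges n \<inter> {e. w e < a}))"
  proof -
    have "(\<Sum>e\<in>edges n \<inter> {e. w e < a}. (1::real)) = (\<Sum>e\<in>edges n. if e \<in> {e. w e < a} then 1 else 0)"
      by (rule sum.inter_restrict[OF finite_edges])
    then show ?thesis by (simp add: indicator_def of_bool_def)
  qed
  also have "edges n \<inter> {e. w e < a} = {e\<in>edges n. w e < a}" by auto
  finally show ?thesis .
qed

lemma ratio_ge1:
  assumes nn: "\<forall>e\<in>edges n. 0 \<le> w e" and f: "0 < f" and n: "1 \<le> n"
  shows "1 \<le> ratio n f w" and "f \<le> fl_opt n f w"
proof -
  have opt: "f \<le> fl_opt n f w" by (rule opt_ge[OF n]) (rule cost_ge_f[OF nn _ _ f])
  then show "f \<le> fl_opt n f w" .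
  have "fl_opt n f w \<le> fl_alg n f w" by (rule opt_le_alg[OF kappa_ge1[OF f n] n])
  then show "1 \<le> ratio n f w" unfolding ratio_def using opt f by simp
qed

lemma ratio_pointwise:
  assumes nn: "\<forall>e\<in>edges n. 0 \<le> w e" and f: "0 < f" and n: "1 \<le> n"
    and eps: "0 < \<epsilon>" "\<epsilon> \<le> 1"
  shows "ratio n f w \<le>
     2 / (\<epsilon> * f * real n) * (real (kappa f n) * f + (\<Sum>v\<in>{kappa f n..<n}. Min ((\<lambda>u. w {u,v}) ` {..<kappa f n})))
     + real (kappa f n) * exp (- real n / 4) * (\<Prod>e\<in>edges n. exp (indicator {..<\<epsilon> * f} (w e)))
     + exp (- real n / 4) / f * (\<Sum>v\<in>{kappa f n..<n}. w {0,v} * (\<Prod>e\<in>edges n. exp (indicator {..<\<epsilon> * f} (w e))))"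
proof -
  define k where "k = kappa f n"
  have k1: "1 \<le> k" unfolding k_def by (rule kappa_ge1[OF f n])
  have kn: "k \<le> n" unfolding k_def by (rule kappa_le)
  define alg where "alg = fl_alg n f w"
  define opt where "opt = fl_opt n f w"
  define S where "S = (\<Sum>v\<in>{k..<n}. Min ((\<lambda>u. w {u,v}) ` {..<k}))"
  define S0 where "S0 = (\<Sum>v\<in>{k..<n}. w {0,v})"
  define Lc where "Lc = card {e\<in>edges n. w e < \<epsilon> * f}"
  define Y where "Y = (\<Prod>e\<in>edges n. exp (indicator {..<\<epsilon> * f} (w e) :: real))"
  define G where "G = card {v. v < n \<and> (\<forall>a<n. a \<noteq> v \<longrightarrow> \<epsilon> * f \<le> w {a,v})}"
  have Y: "Y = exp (real Lc)" unfolding Y_def Lc_def by (rule Y_eq)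
  have optf: "f \<le> opt" unfolding opt_def by (rule ratio_ge1(2)[OF nn f n])
  have optalg: "opt \<le> alg" unfolding opt_def alg_def by (rule opt_le_alg[OF kappa_ge1[OF f n] n])
  have optG: "\<epsilon> * f * real G \<le> opt" unfolding opt_def G_def
    by (rule opt_ge[OF n]) (rule cost_ge_G[OF nn _ _ f eps])
  have Gb: "real n - 2 * real Lc \<le> real G" unfolding G_def Lc_def by (rule card_bad)
  have algS: "alg \<le> real k * f + S" unfolding alg_def S_def k_def by (rule alg_le[OF kappa_ge1[OF f n]])
  have SS0: "S \<le> S0" unfolding S_def S0_def by (intro sum_mono min_le0 k1)
  have wv: "0 \<le> w {u,v}" if "u < n" "v < n" "u \<noteq> v" for u v using nn edge_in that by blast
  have S0: "0 \<le> S" unfolding S_def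
  proof (intro sum_nonneg)
    fix v assume v: "v \<in> {k..<n}"
    show "0 \<le> Min ((\<lambda>u. w {u,v}) ` {..<k})"
    proof (subst Min_ge_iff)
      show "finite ((\<lambda>u. w {u,v}) ` {..<k})" by simp
      show "(\<lambda>u. w {u,v}) ` {..<k} \<noteq> {}" using k1 by (auto simp: lessThan_empty_iff)
      show "\<forall>a\<in>(\<lambda>u. w {u,v}) ` {..<k}. 0 \<le> a" using v kn wv by auto
    qed
  qed
  have S00: "0 \<le> S0" using S0 SS0 by linarith
  have Ypos: "0 < Y" unfolding Y by simp
  have opos: "0 < opt" using optf f by linarith
  have apos: "0 \<le> alg" using opos optalg by linarith
  define T1 where "T1 = 2 / (\<epsilon> * f * real n) * (real k * f + S)"
  define T2 where "T2 = real k * exp (- real n / 4) * Y + exp (- real n / 4) / f * (\<Sum>v\<in>{k..<n}. w {0,v} * Y)"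
  have T2eq: "T2 = (real k + S0 / f) * (Y * exp (- real n / 4))"
  proof -
    have "(\<Sum>v\<in>{k..<n}. w {0,v} * Y) = S0 * Y" unfolding S0_def by (simp add: sum_distrib_right)
    then show ?thesis unfolding T2_def using f by (simp add: field_simps)
  qed
  have T1pos: "0 \<le> T1" unfolding T1_def using eps f S0 by simp
  have T2pos: "0 \<le> T2" unfolding T2eq using f S00 Ypos k1 by simp
  have "ratio n f w \<le> T1 + T2"
  proof (cases "4 * real Lc \<le> real n")
    case True
    then have Gn: "real n / 2 \<le> real G" using Gb by linarith
    have npos: "0 < real n" using n by simp
    have d1: "0 < \<epsilon> * f * (real n / 2)" using eps f npos by simp
    have d2: "\<epsilon> * f * (real n / 2) \<le> opt"
    proof -
      have "\<epsilon> * f * (real n / 2) \<le> \<epsilon> * f * real G" using Gn eps f by (intro mult_left_mono) auto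
      then show ?thesis using optG by linarith
    qed
    have "ratio n f w = alg / opt" unfolding ratio_def alg_def opt_def ..
    also have "\<dots> \<le> alg / (\<epsilon> * f * (real n / 2))"
      by (rule divide_left_mono[OF d2 apos]) (use d1 opos in simp)
    also have "\<dots> = 2 / (\<epsilon> * f * real n) * alg" by (simp add: field_simps)
    also have "\<dots> \<le> T1" unfolding T1_def using algS eps f npos by (intro mult_left_mono) auto
    finally show ?thesis using T2pos by linarith
  next
    case False
    have e1: "1 \<le> Y * exp (- real n / 4)"
    proof -
      have "Y * exp (- real n / 4) = exp (real Lc - real n / 4)" unfolding Y by (subst exp_add[symmetric]) simp
      also have "1 \<le> \<dots>" using False by simp
      finally show ?thesis .
    qed
    have "ratio n f w = alg / opt" unfolding ratio_def alg_def opt_def ..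
    also have "\<dots> \<le> alg / f" by (rule divide_left_mono[OF optf apos]) (use opos f in simp)
    also have "\<dots> \<le> (real k * f + S0) / f" using algS SS0 f by (intro divide_right_mono) auto
    also have "\<dots> = real k + S0 / f" using f by (simp add: field_simps)
    also have "\<dots> \<le> (real k + S0 / f) * (Y * exp (- real n / 4))"
    proof -
      have "0 \<le> real k + S0 / f" using f S00 by simp
      then show ?thesis using e1 by (simp add: mult_le_cancel_left1)
    qed
    also have "\<dots> = T2" unfolding T2eq ..
    finally show ?thesis using T1pos by linarith
  qed
  then show ?thesis unfolding T1_def T2_def S_def Y_def k_def by simp
qed


subsection \<open>Integrals of the bounding terms\<close>

lemma ind_meas[measurable]: "(\<lambda>x. indicator {..<(a::real)} x :: real) \<in> borel_measurable borel"
  by (rule borel_measurable_indicator) simp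

lemma g_meas: "(\<lambda>x. exp (indicator {..<(a::real)} x :: real)) \<in> borel_measurable borel"
  using measurable_compose[OF ind_meas[of a] borel_measurable_exp] by (simp add: comp_def)

lemma g_meas2: "(\<lambda>x. x * exp (indicator {..<(a::real)} x :: real)) \<in> borel_measurable borel"
  by (rule borel_measurable_times[OF _ g_meas]) simp

lemma Y_int:
  assumes ne: "edges n \<noteq> {}" and a: "0 \<le> a"
  shows "integrable (rsp_space n) (\<lambda>w. \<Prod>e\<in>edges n. exp (indicator {..<a} (w e) :: real))"
    and "integral\<^sup>L (rsp_space n) (\<lambda>w. \<Prod>e\<in>edges n. exp (indicator {..<a} (w e) :: real))
          \<le> exp (2 * a * real (card (edges n)))"
proof -
  let ?g = "\<lambda>e::nat set. \<lambda>x. exp (indicator {..<a} x :: real)"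
  have int: "\<And>e. e \<in> edges n \<Longrightarrow> integrable (rsp_space n) (\<lambda>w. ?g e (w e))"
    using exp_ind_integral(1)[OF _ a] by simp
  show "integrable (rsp_space n) (\<lambda>w. \<Prod>e\<in>edges n. exp (indicator {..<a} (w e) :: real))"
    using prod_indep(1)[OF ne g_meas int] by simp
  have "integral\<^sup>L (rsp_space n) (\<lambda>w. \<Prod>e\<in>edges n. exp (indicator {..<a} (w e) :: real))
      = (\<Prod>e\<in>edges n. integral\<^sup>L (rsp_space n) (\<lambda>w. exp (indicator {..<a} (w e) :: real)))"
    using prod_indep(2)[OF ne g_meas int] by simp
  also have "\<dots> \<le> (\<Prod>e\<in>edges n. exp (2 * a))"
    by (rule prod_mono) (use exp_ind_integral(2,3)[OF _ a] in auto)
  also have "\<dots> = exp (2 * a * real (card (edges n)))"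
    by (simp add: exp_of_nat_mult[symmetric] mult.commute)
  finally show "integral\<^sup>L (rsp_space n) (\<lambda>w. \<Prod>e\<in>edges n. exp (indicator {..<a} (w e) :: real))
          \<le> exp (2 * a * real (card (edges n)))" .
qed

lemma Z_int:
  assumes e0: "e0 \<in> edges n" and a: "0 \<le> a"
  shows "integrable (rsp_space n) (\<lambda>w. w e0 * (\<Prod>e\<in>edges n. exp (indicator {..<a} (w e) :: real)))"
    and "integral\<^sup>L (rsp_space n) (\<lambda>w. w e0 * (\<Prod>e\<in>edges n. exp (indicator {..<a} (w e) :: real)))
          \<le> exp 1 * exp (2 * a * real (card (edges n)))"
proof -
  interpret prob_space "rsp_space n" by (rule prob_M)
  have ne: "edges n \<noteq> {}" using e0 by auto
  define g where "g e = (if e = e0 then (\<lambda>x. x * exp (indicator {..<a} x :: real)) else (\<lambda>x. exp (indicator {..<a} x :: real)))" for e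
  have gm: "\<And>e. g e \<in> borel_measurable borel" unfolding g_def using g_meas g_meas2 by simp
  have int0: "integrable (rsp_space n) (\<lambda>w. w e0 * exp (indicator {..<a} (w e0) :: real))"
  proof (rule Bochner_Integration.integrable_bound[where f="\<lambda>w. exp 1 * w e0"])
    show "integrable (rsp_space n) (\<lambda>w. exp 1 * w e0)"
      using integrable.intros[OF exp_comp_integral[OF e0]] by simp
    show "(\<lambda>w. w e0 * exp (indicator {..<a} (w e0) :: real)) \<in> borel_measurable (rsp_space n)"
      using measurable_compose[OF comp_meas g_meas2] by simp
    show "AE w in rsp_space n. norm (w e0 * exp (indicator {..<a} (w e0) :: real)) \<le> norm (exp 1 * w e0)"
    proof (rule AE_I2)
      fix w :: "nat set \<Rightarrow> real"
      have "exp (indicator {..<a} (w e0) :: real) \<le> exp 1" by (simp add: indicator_def)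
      then have "\<bar>w e0\<bar> * exp (indicator {..<a} (w e0) :: real) \<le> \<bar>w e0\<bar> * exp 1"
        by (rule mult_left_mono) simp
      then show "norm (w e0 * exp (indicator {..<a} (w e0) :: real)) \<le> norm (exp 1 * w e0)"
        by (simp add: abs_mult mult.commute)
    qed
  qed
  have int: "\<And>e. e \<in> edges n \<Longrightarrow> integrable (rsp_space n) (\<lambda>w. g e (w e))"
    unfolding g_def using exp_ind_integral(1)[OF _ a] int0 by auto
  have prodeq: "(\<Prod>e\<in>edges n. g e (w e)) = w e0 * (\<Prod>e\<in>edges n. exp (indicator {..<a} (w e) :: real))" for w
  proof -
    have "(\<Prod>e\<in>edges n. g e (w e)) = g e0 (w e0) * (\<Prod>e\<in>edges n - {e0}. g e (w e))"
      by (rule prod.remove[OF finite_edges e0])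
    also have "(\<Prod>e\<in>edges n - {e0}. g e (w e)) = (\<Prod>e\<in>edges n - {e0}. exp (indicator {..<a} (w e) :: real))"
      by (intro prod.cong) (auto simp: g_def)
    also have "(\<Prod>e\<in>edges n. exp (indicator {..<a} (w e) :: real)) =
        exp (indicator {..<a} (w e0)) * (\<Prod>e\<in>edges n - {e0}. exp (indicator {..<a} (w e) :: real))"
      by (rule prod.remove[OF finite_edges e0])
    ultimately show ?thesis by (simp add: g_def)
  qed
  show "integrable (rsp_space n) (\<lambda>w. w e0 * (\<Prod>e\<in>edges n. exp (indicator {..<a} (w e) :: real)))"
    using prod_indep(1)[OF ne gm int] prodeq by simp
  have "integral\<^sup>L (rsp_space n) (\<lambda>w. w e0 * (\<Prod>e\<in>edges n. exp (indicator {..<a} (w e) :: real)))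
      = (\<Prod>e\<in>edges n. integral\<^sup>L (rsp_space n) (\<lambda>w. g e (w e)))"
    using prod_indep(2)[OF ne gm int] prodeq by simp
  also have "\<dots> = integral\<^sup>L (rsp_space n) (\<lambda>w. g e0 (w e0)) * (\<Prod>e\<in>edges n - {e0}. integral\<^sup>L (rsp_space n) (\<lambda>w. g e (w e)))"
    by (rule prod.remove[OF finite_edges e0])
  also have "\<dots> \<le> exp 1 * (\<Prod>e\<in>edges n - {e0}. exp (2 * a))"
  proof (rule mult_mono)
    have "integral\<^sup>L (rsp_space n) (\<lambda>w. g e0 (w e0)) = integral\<^sup>L (rsp_space n) (\<lambda>w. w e0 * exp (indicator {..<a} (w e0) :: real))"
      by (simp add: g_def)
    also have "\<dots> \<le> integral\<^sup>L (rsp_space n) (\<lambda>w. exp 1 * w e0)"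
    proof (rule integral_mono_AE[OF int0])
      show "integrable (rsp_space n) (\<lambda>w. exp 1 * w e0)"
        using integrable.intros[OF exp_comp_integral[OF e0]] by simp
      show "AE w in rsp_space n. w e0 * exp (indicator {..<a} (w e0) :: real) \<le> exp 1 * w e0"
        using AE_nonneg[of n]
      proof (rule AE_mp)
        show "AE w in rsp_space n. (\<forall>e\<in>edges n. 0 \<le> w e) \<longrightarrow> w e0 * exp (indicator {..<a} (w e0) :: real) \<le> exp 1 * w e0"
        proof (rule AE_I2, rule impI)
          fix w :: "nat set \<Rightarrow> real" assume "\<forall>e\<in>edges n. 0 \<le> w e"
          then have "0 \<le> w e0" using e0 by auto
          moreover have "exp (indicator {..<a} (w e0) :: real) \<le> exp 1" by (simp add: indicator_def)
          ultimately have "w e0 * exp (indicator {..<a} (w e0) :: real) \<le> w e0 * exp 1"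
            by (intro mult_left_mono)
          then show "w e0 * exp (indicator {..<a} (w e0) :: real) \<le> exp 1 * w e0"
            by (simp add: mult.commute)
        qed
      qed
    qed
    also have "\<dots> = exp 1"
      using has_bochner_integral_integral_eq[OF exp_comp_integral[OF e0]] by simp
    finally show "integral\<^sup>L (rsp_space n) (\<lambda>w. g e0 (w e0)) \<le> exp 1" .
    show "(\<Prod>e\<in>edges n - {e0}. integral\<^sup>L (rsp_space n) (\<lambda>w. g e (w e))) \<le> (\<Prod>e\<in>edges n - {e0}. exp (2 * a))"
      by (rule prod_mono) (use exp_ind_integral(2,3)[OF _ a] in \<open>auto simp: g_def\<close>)
    show "0 \<le> exp (1::real)" by simp
    show "0 \<le> (\<Prod>e\<in>edges n - {e0}. integral\<^sup>L (rsp_space n) (\<lambda>w. g e (w e)))"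
      by (rule prod_nonneg) (use exp_ind_integral(3)[OF _ a] in \<open>auto simp: g_def\<close>)
  qed
  also have "\<dots> = exp 1 * exp (2 * a * real (card (edges n - {e0})))"
    by (simp add: exp_of_nat_mult[symmetric] mult.commute)
  also have "\<dots> \<le> exp 1 * exp (2 * a * real (card (edges n)))"
  proof -
    have "card (edges n - {e0}) \<le> card (edges n)" using finite_edges by (intro card_mono) auto
    then have "2 * a * real (card (edges n - {e0})) \<le> 2 * a * real (card (edges n))"
      using a by (intro mult_left_mono) auto
    then show ?thesis by simp
  qed
  finally show "integral\<^sup>L (rsp_space n) (\<lambda>w. w e0 * (\<Prod>e\<in>edges n. exp (indicator {..<a} (w e) :: real)))
          \<le> exp 1 * exp (2 * a * real (card (edges n)))" .
qed


lemma exp_poly_bound: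
  assumes n: "1 \<le> x"
  shows "(x + 3 * x^2) * exp (- x / 8) \<le> (55296::real)"
proof -
  have x0: "0 < x" using n by simp
  have "x/24 \<le> exp (x/24)" using exp_ge_add_one_self[of "x/24"] by linarith
  then have "(x/24)^3 \<le> exp (x/24)^3" by (rule power_mono) (use x0 in simp)
  also have "exp (x/24)^3 = exp (x/8)"
    using exp_of_nat_mult[of 3 "x/24"] by simp
  finally have e: "(x/24)^3 \<le> exp (x/8)" .
  have "(x + 3 * x^2) * exp (- x / 8) \<le> (4 * x^2) * exp (- x / 8)"
    using n by (intro mult_right_mono) (auto simp: power2_eq_square)
  also have "\<dots> = 4 * x^2 / exp (x/8)" by (simp add: exp_minus field_simps)
  also have "\<dots> \<le> 4 * x^2 / (x/24)^3"
    by (rule divide_left_mono[OF e]) (use x0 in auto)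
  also have "\<dots> = 55296 / x" using x0 by (simp add: field_simps power2_eq_square power3_eq_cube)
  also have "\<dots> \<le> 55296" using n by (simp add: field_simps)
  finally show ?thesis .
qed


lemma main_bound:
  fixes n :: nat and f c :: real
  assumes f: "0 < f" and c: "0 < c" and kc: "c * real n \<le> real (kappa f n)" and cn: "2 \<le> c * real n"
  shows "integrable (rsp_space n) (ratio n f)"
    and "integral\<^sup>L (rsp_space n) (ratio n f) \<le> 128 / c + 55296"
    and "1 \<le> integral\<^sup>L (rsp_space n) (ratio n f)"
proof -
  interpret prob_space "rsp_space n" by (rule prob_M)
  let ?M = "rsp_space n"
  define k where "k = kappa f n"
  have kn: "k \<le> n" unfolding k_def by (rule kappa_le)
  have knr: "real k \<le> real n" using kn by simp
  have npos: "0 < real n" using cn c by (cases "n = 0") auto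
  have c1: "c \<le> 1"
  proof -
    have "c * real n \<le> 1 * real n" using kc knr k_def by simp
    then show ?thesis using npos by (rule mult_right_le_imp_le)
  qed
  have n2: "2 \<le> real n"
  proof -
    have "c * real n \<le> 1 * real n" using c1 npos by (intro mult_right_mono) auto
    then show ?thesis using cn by simp
  qed
  have n1: "1 \<le> n" using n2 by simp
  have k2: "2 \<le> real k" using kc cn k_def by simp
  have k1: "1 \<le> k" using k2 by simp
  have fnc: "f * real n * c < 2"
  proof -
    have fk: "f * (real k - 1) < 1" unfolding k_def by (rule kappa_f[OF f])
    have "c * real n / 2 \<le> real k - 1" using kc k2 k_def by linarith
    then have "f * (c * real n / 2) \<le> f * (real k - 1)" by (rule mult_left_mono) (use f in simp)
    then show ?thesis using fk by (simp add: algebra_simps)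
  qed
  define \<epsilon> where "\<epsilon> = c / 32"
  have eps: "0 < \<epsilon>" "\<epsilon> \<le> 1" unfolding \<epsilon>_def using c c1 by auto
  define a where "a = \<epsilon> * f"
  have a0: "0 \<le> a" unfolding a_def using eps f by simp
  have ha: "2 * a * real (card (edges n)) \<le> real n / 8"
  proof -
    have "real (card (edges n)) \<le> real n * real n" using card_edges_le[of n] by (simp flip: of_nat_mult)
    then have "2 * a * real (card (edges n)) \<le> 2 * a * (real n * real n)"
      using a0 by (intro mult_left_mono) auto
    also have "\<dots> = (f * real n * c) * real n / 16" unfolding a_def \<epsilon>_def by (simp add: field_simps)
    also have "\<dots> \<le> 2 * real n / 16" using fnc npos by (intro divide_right_mono mult_right_mono) auto
    finally show ?thesis by simp
  qed
  have ne: "edges n \<noteq> {}" using edge_in[of 0 1 n] n2 by auto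
  define Y where "Y w = (\<Prod>e\<in>edges n. exp (indicator {..<a} (w e) :: real))" for w :: "nat set \<Rightarrow> real"
  define X where "X v w = Min ((\<lambda>u. w {u,v}) ` {..<k})" for v :: nat and w :: "nat set \<Rightarrow> real"
  define E2 where "E2 = exp (- real n / 4)"
  define C1 where "C1 = 2 / (\<epsilon> * f * real n)"
  define B1 where "B1 w = C1 * (real k * f + (\<Sum>v\<in>{k..<n}. X v w))" for w :: "nat set \<Rightarrow> real"
  define B2 where "B2 w = real k * E2 * Y w" for w :: "nat set \<Rightarrow> real"
  define B3 where "B3 w = E2 / f * (\<Sum>v\<in>{k..<n}. w {0,v} * Y w)" for w :: "nat set \<Rightarrow> real"
  have AEB: "AE w in ?M. ratio n f w \<le> B1 w + B2 w + B3 w"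
    using AE_nonneg[of n]
  proof (rule AE_mp)
    show "AE w in ?M. (\<forall>e\<in>edges n. 0 \<le> w e) \<longrightarrow> ratio n f w \<le> B1 w + B2 w + B3 w"
    proof (rule AE_I2, rule impI)
      fix w :: "nat set \<Rightarrow> real" assume nn: "\<forall>e\<in>edges n. 0 \<le> w e"
      show "ratio n f w \<le> B1 w + B2 w + B3 w"
        using ratio_pointwise[OF nn f n1 eps]
        unfolding B1_def B2_def B3_def C1_def E2_def X_def Y_def k_def a_def by simp
    qed
  qed
  have AE1: "AE w in ?M. 1 \<le> ratio n f w"
    using AE_nonneg[of n]
  proof (rule AE_mp)
    show "AE w in ?M. (\<forall>e\<in>edges n. 0 \<le> w e) \<longrightarrow> 1 \<le> ratio n f w"
      using ratio_ge1(1)[OF _ f n1] by auto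
  qed
  have hX: "\<And>v. v \<in> {k..<n} \<Longrightarrow> has_bochner_integral ?M (X v) (1 / real k)"
    unfolding X_def using exp_min_integral[OF k1] by auto
  have intY: "integrable ?M Y" unfolding Y_def by (rule Y_int(1)[OF ne a0])
  have IY: "integral\<^sup>L ?M Y \<le> exp (2 * a * real (card (edges n)))" unfolding Y_def by (rule Y_int(2)[OF ne a0])
  have e0: "\<And>v. v \<in> {k..<n} \<Longrightarrow> {0,v} \<in> edges n" using k1 by (intro edge_in) auto
  have intZ: "\<And>v. v \<in> {k..<n} \<Longrightarrow> integrable ?M (\<lambda>w. w {0,v} * Y w)"
    unfolding Y_def using Z_int(1)[OF e0 a0] by simp
  have IZ: "\<And>v. v \<in> {k..<n} \<Longrightarrow> integral\<^sup>L ?M (\<lambda>w. w {0,v} * Y w) \<le> exp 1 * exp (2 * a * real (card (edges n)))"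
    unfolding Y_def using Z_int(2)[OF e0 a0] by simp
  have intX: "\<And>v. v \<in> {k..<n} \<Longrightarrow> integrable ?M (X v)" using hX integrable.intros by blast
  have intB1: "integrable ?M B1" unfolding B1_def using intX
    by (intro Bochner_Integration.integrable_mult_right Bochner_Integration.integrable_add Bochner_Integration.integrable_sum) auto
  have intB2: "integrable ?M B2" unfolding B2_def using intY
    by (intro Bochner_Integration.integrable_mult_right)
  have intB3: "integrable ?M B3" unfolding B3_def using intZ
    by (intro Bochner_Integration.integrable_mult_right Bochner_Integration.integrable_sum) auto
  have intB: "integrable ?M (\<lambda>w. B1 w + B2 w + B3 w)"
    using intB1 intB2 intB3 by (intro Bochner_Integration.integrable_add)
  have IB1: "integral\<^sup>L ?M B1 = C1 * (real k * f + (real n - real k) / real k)"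
  proof -
    have "integral\<^sup>L ?M (\<lambda>w. \<Sum>v\<in>{k..<n}. X v w) = (\<Sum>v\<in>{k..<n}. integral\<^sup>L ?M (X v))"
      using intX by (rule Bochner_Integration.integral_sum)
    also have "\<dots> = (\<Sum>v\<in>{k..<n}. 1 / real k)"
      using hX has_bochner_integral_integral_eq by (intro sum.cong) auto
    also have "\<dots> = (real n - real k) / real k" using kn by (simp add: of_nat_diff)
    finally have s: "integral\<^sup>L ?M (\<lambda>w. \<Sum>v\<in>{k..<n}. X v w) = (real n - real k) / real k" .
    have "integral\<^sup>L ?M (\<lambda>w. real k * f + (\<Sum>v\<in>{k..<n}. X v w)) =
        integral\<^sup>L ?M (\<lambda>w. real k * f) + integral\<^sup>L ?M (\<lambda>w. \<Sum>v\<in>{k..<n}. X v w)"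
      using intX by (intro Bochner_Integration.integral_add) auto
    also have "\<dots> = real k * f + (real n - real k) / real k" using s by (simp add: prob_space)
    finally show ?thesis unfolding B1_def by simp
  qed
  have IB2: "integral\<^sup>L ?M B2 \<le> real k * E2 * exp (2 * a * real (card (edges n)))"
    unfolding B2_def using IY k1 by (simp add: E2_def mult_left_mono)
  have IB3: "integral\<^sup>L ?M B3 \<le> E2 / f * ((real n - real k) * (exp 1 * exp (2 * a * real (card (edges n)))))"
  proof -
    have "integral\<^sup>L ?M (\<lambda>w. \<Sum>v\<in>{k..<n}. w {0,v} * Y w) = (\<Sum>v\<in>{k..<n}. integral\<^sup>L ?M (\<lambda>w. w {0,v} * Y w))"
      using intZ by (rule Bochner_Integration.integral_sum)
    also have "\<dots> \<le> (\<Sum>v\<in>{k..<n}. exp 1 * exp (2 * a * real (card (edges n))))"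
      using IZ by (rule sum_mono)
    also have "\<dots> = (real n - real k) * (exp 1 * exp (2 * a * real (card (edges n))))"
      using kn by (simp add: of_nat_diff)
    finally have "integral\<^sup>L ?M (\<lambda>w. \<Sum>v\<in>{k..<n}. w {0,v} * Y w) \<le> (real n - real k) * (exp 1 * exp (2 * a * real (card (edges n))))" .
    moreover have "0 \<le> E2 / f" unfolding E2_def using f by simp
    ultimately have "E2 / f * integral\<^sup>L ?M (\<lambda>w. \<Sum>v\<in>{k..<n}. w {0,v} * Y w) \<le> E2 / f * ((real n - real k) * (exp 1 * exp (2 * a * real (card (edges n)))))"
      by (intro mult_left_mono)
    then show ?thesis unfolding B3_def by simp
  qed
  define Q where "Q = exp (2 * a * real (card (edges n)))"
  have EQ: "E2 * Q \<le> exp (- real n / 8)"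
  proof -
    have "E2 * Q = exp (- real n / 4 + 2 * a * real (card (edges n)))" unfolding E2_def Q_def by (subst exp_add) simp
    also have "\<dots> \<le> exp (- real n / 8)" using ha by simp
    finally show ?thesis .
  qed
  have N1: "C1 * (real k * f + (real n - real k) / real k) \<le> 4 / \<epsilon>"
  proof -
    have "C1 * (real k * f) = 2 / \<epsilon> * (real k / real n)" unfolding C1_def using f by (simp add: field_simps)
    also have "\<dots> \<le> 2 / \<epsilon> * 1" using knr npos eps by (intro mult_left_mono) auto
    finally have p1: "C1 * (real k * f) \<le> 2 / \<epsilon>" by simp
    have p2: "C1 * ((real n - real k) / real k) \<le> 2 / \<epsilon>"
    proof (cases "k = n")
      case True then show ?thesis using eps by simp
    next
      case False
      then have kf: "1 \<le> real k * f" using kappa_lt[OF f] kn unfolding k_def by simp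
      have "C1 * ((real n - real k) / real k) = 2 / \<epsilon> * ((real n - real k) / (real n * (real k * f)))"
        unfolding C1_def using f k2 by (simp add: field_simps)
      also have "\<dots> \<le> 2 / \<epsilon> * 1"
      proof (rule mult_left_mono)
        have "real n - real k \<le> real n * (real k * f)"
        proof -
          have "real n * 1 \<le> real n * (real k * f)" using kf npos by (intro mult_left_mono) auto
          then show ?thesis using k2 by simp
        qed
        then show "(real n - real k) / (real n * (real k * f)) \<le> 1"
          using npos kf by (simp add: divide_le_eq)
      qed (use eps in simp)
      finally show ?thesis by simp
    qed
    show ?thesis using p1 p2 by (simp add: distrib_left)
  qed
  have N2: "real k * E2 * Q \<le> real n * exp (- real n / 8)"
  proof -
    have "real k * E2 * Q = real k * (E2 * Q)" by simp
    also have "\<dots> \<le> real n * exp (- real n / 8)"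
      using knr EQ by (intro mult_mono) (auto simp: E2_def Q_def)
    finally show ?thesis .
  qed
  have N3: "E2 / f * ((real n - real k) * (exp 1 * Q)) \<le> 3 * real n ^ 2 * exp (- real n / 8)"
  proof (cases "k = n")
    case True then show ?thesis by simp
  next
    case False
    then have kf: "1 \<le> real k * f" using kappa_lt[OF f] kn unfolding k_def by simp
    have invf: "1 / f \<le> real n"
    proof -
      have "1 / f \<le> real k" using kf f by (simp add: divide_le_eq mult.commute)
      then show ?thesis using knr by linarith
    qed
    have "E2 / f * ((real n - real k) * (exp 1 * Q)) = (1 / f) * (real n - real k) * exp 1 * (E2 * Q)"
      by (simp add: field_simps)
    also have "\<dots> \<le> real n * real n * 3 * exp (- real n / 8)"
    proof (intro mult_mono)
      show "1 / f \<le> real n" by (rule invf)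
      show "real n - real k \<le> real n" by simp
      show "exp (1::real) \<le> 3" by (rule exp_le)
      show "E2 * Q \<le> exp (- real n / 8)" by (rule EQ)
    qed (use f knr npos in \<open>auto simp: E2_def Q_def\<close>)
    finally show ?thesis by (simp add: power2_eq_square algebra_simps)
  qed
  have IB: "integral\<^sup>L ?M (\<lambda>w. B1 w + B2 w + B3 w) \<le> 128 / c + 55296"
  proof -
    have "integral\<^sup>L ?M (\<lambda>w. B1 w + B2 w + B3 w) = integral\<^sup>L ?M B1 + integral\<^sup>L ?M B2 + integral\<^sup>L ?M B3"
      using intB1 intB2 intB3 by simp
    also have "\<dots> \<le> 4 / \<epsilon> + real n * exp (- real n / 8) + 3 * real n ^ 2 * exp (- real n / 8)"
      using IB1 IB2 IB3 N1 N2 N3 unfolding Q_def by linarith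
    also have "\<dots> = 128 / c + (real n + 3 * real n ^ 2) * exp (- real n / 8)"
      unfolding \<epsilon>_def by (simp add: algebra_simps)
    also have "\<dots> \<le> 128 / c + 55296" using exp_poly_bound[of "real n"] n1 by simp
    finally show ?thesis .
  qed
  show int: "integrable ?M (ratio n f)"
  proof (rule Bochner_Integration.integrable_bound[OF intB ratio_meas])
    show "AE w in ?M. norm (ratio n f w) \<le> norm (B1 w + B2 w + B3 w)"
      using AEB AE1 by eventually_elim auto
  qed
  have "integral\<^sup>L ?M (ratio n f) \<le> integral\<^sup>L ?M (\<lambda>w. B1 w + B2 w + B3 w)"
    by (rule integral_mono_AE[OF int intB AEB])
  then show "integral\<^sup>L ?M (ratio n f) \<le> 128 / c + 55296" using IB by linarith
  have "integral\<^sup>L ?M (\<lambda>w. 1) \<le> integral\<^sup>L ?M (ratio n f)"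
    by (rule integral_mono_AE[OF _ int AE1]) simp
  then show "1 \<le> integral\<^sup>L ?M (ratio n f)" by (simp add: prob_space)
qed


subsection \<open>Bound for very small f\<close>

lemma ind_integral:
  assumes e: "e \<in> edges n" and a: "0 \<le> a"
  shows "integrable (rsp_space n) (\<lambda>w. indicator {..<a} (w e) :: real)"
    and "integral\<^sup>L (rsp_space n) (\<lambda>w. indicator {..<a} (w e) :: real) \<le> a"
proof -
  interpret prob_space "rsp_space n" by (rule prob_M)
  let ?M = "rsp_space n"
  define A where "A = {w \<in> space ?M. w e < a}"
  have Ameas: "A \<in> sets ?M" unfolding A_def by measurable
  have ind: "\<And>w. w \<in> space ?M \<Longrightarrow> indicator {..<a} (w e) = (indicator A w :: real)"
    unfolding A_def by (auto simp: indicator_def)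
  show "integrable ?M (\<lambda>w. indicator {..<a} (w e) :: real)"
  proof (rule integrable_const_bound[where B=1])
    show "AE w in ?M. norm (indicator {..<a} (w e) :: real) \<le> 1" by (auto simp: indicator_def)
    show "(\<lambda>w. indicator {..<a} (w e) :: real) \<in> borel_measurable ?M"
      using measurable_compose[OF comp_meas ind_meas] by simp
  qed
  have "integral\<^sup>L ?M (\<lambda>w. indicator {..<a} (w e) :: real) = integral\<^sup>L ?M (indicator A :: _ \<Rightarrow> real)"
    using ind by (intro Bochner_Integration.integral_cong) auto
  also have "\<dots> = prob A" using Ameas by (simp add: Int_absorb2 sets.sets_into_space)
  also have "\<dots> \<le> prob {w \<in> space ?M. w e \<le> a}"
    unfolding A_def by (intro finite_measure_mono) auto
  also have "\<dots> = 1 - exp (- a * 1)"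
    by (rule exponential_distributedD_le[OF distributed_comp[OF e] a]) simp
  also have "\<dots> \<le> a" using exp_ge_add_one_self[of "-a"] by simp
  finally show "integral\<^sup>L ?M (\<lambda>w. indicator {..<a} (w e) :: real) \<le> a" .
qed

lemma small_pointwise:
  assumes nn: "\<forall>e\<in>edges n. 0 \<le> w e" and f: "0 < f" and n: "1 \<le> n" and fn: "f * real n < 1"
  shows "ratio n f w \<le> 1 + real n * (\<Sum>e\<in>edges n. indicator {..<f} (w e))"
proof -
  have k: "kappa f n = n" by (rule kappa_small[OF f fn])
  define Lc where "Lc = card {e\<in>edges n. w e < f}"
  have Lc: "(\<Sum>e\<in>edges n. indicator {..<f} (w e) :: real) = real Lc"
  proof -
    have "(\<Sum>e\<in>edges n. indicator {..<f} (w e) :: real) = (\<Sum>e\<in>edges n. indicator {e. w e < f} e)"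
      by (intro sum.cong) (auto simp: indicator_def)
    also have "\<dots> = real (card (edges n \<inter> {e. w e < f}))"
    proof -
      have "(\<Sum>e\<in>edges n \<inter> {e. w e < f}. (1::real)) = (\<Sum>e\<in>edges n. if e \<in> {e. w e < f} then 1 else 0)"
        by (rule sum.inter_restrict[OF finite_edges])
      then show ?thesis by (simp add: indicator_def of_bool_def)
    qed
    also have "edges n \<inter> {e. w e < f} = {e\<in>edges n. w e < f}" by auto
    finally show ?thesis unfolding Lc_def .
  qed
  have optf: "f \<le> fl_opt n f w" by (rule ratio_ge1(2)[OF nn f n])
  have algle: "fl_alg n f w \<le> real n * f"
  proof -
    have "fl_alg n f w \<le> real (kappa f n) * f + (\<Sum>v\<in>{kappa f n..<n}. Min ((\<lambda>u. w {u,v}) ` {..<kappa f n}))"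
      by (rule alg_le[OF kappa_ge1[OF f n]])
    then show ?thesis unfolding k by simp
  qed
  have algpos: "0 \<le> fl_alg n f w"
    using optf opt_le_alg[OF kappa_ge1[OF f n] n, of w] f by linarith
  show ?thesis
  proof (cases "Lc = 0")
    case True
    have G: "real n - 2 * real Lc \<le> real (card {v. v < n \<and> (\<forall>a<n. a \<noteq> v \<longrightarrow> 1 * f \<le> w {a,v})})"
      unfolding Lc_def using card_bad[of n w "1 * f"] by simp
    have "1 * f * real (card {v. v < n \<and> (\<forall>a<n. a \<noteq> v \<longrightarrow> 1 * f \<le> w {a,v})}) \<le> fl_opt n f w"
      by (rule opt_ge[OF n]) (rule cost_ge_G[OF nn _ _ f], auto)
    moreover have "f * real n \<le> 1 * f * real (card {v. v < n \<and> (\<forall>a<n. a \<noteq> v \<longrightarrow> 1 * f \<le> w {a,v})})"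
      using G True f by (simp add: mult_left_mono)
    ultimately have optn: "f * real n \<le> fl_opt n f w" by linarith
    have fnpos: "0 < f * real n" using f n by simp
    have "ratio n f w \<le> fl_alg n f w / (f * real n)" unfolding ratio_def
      by (rule divide_left_mono[OF optn algpos]) (use optn fnpos in simp)
    also have "\<dots> \<le> real n * f / (f * real n)" using algle fnpos by (intro divide_right_mono) auto
    also have "\<dots> = 1" using f n by simp
    finally show ?thesis using Lc True by simp
  next
    case False
    have "ratio n f w \<le> fl_alg n f w / f" unfolding ratio_def
      by (rule divide_left_mono[OF optf algpos]) (use optf f in simp)
    also have "\<dots> \<le> real n * f / f" using algle f by (intro divide_right_mono) auto
    also have "\<dots> = real n" using f by simp
    also have "\<dots> \<le> real n * real Lc"
    proof -
      have "real n * 1 \<le> real n * real Lc" using False by (intro mult_left_mono) auto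
      then show ?thesis by simp
    qed
    finally show ?thesis using Lc by simp
  qed
qed


lemma small_bound:
  fixes n :: nat and f :: real
  assumes f: "0 < f" and n: "1 \<le> n" and fn: "f * real n < 1"
  shows "integrable (rsp_space n) (ratio n f)"
    and "integral\<^sup>L (rsp_space n) (ratio n f) \<le> 1 + real n ^ 3 * f"
    and "1 \<le> integral\<^sup>L (rsp_space n) (ratio n f)"
proof -
  interpret prob_space "rsp_space n" by (rule prob_M)
  let ?M = "rsp_space n"
  define B where "B w = 1 + real n * (\<Sum>e\<in>edges n. indicator {..<f} (w e) :: real)" for w :: "nat set \<Rightarrow> real"
  have f0: "0 \<le> f" using f by simp
  have AEB: "AE w in ?M. ratio n f w \<le> B w"
    using AE_nonneg[of n]
  proof (rule AE_mp)
    show "AE w in ?M. (\<forall>e\<in>edges n. 0 \<le> w e) \<longrightarrow> ratio n f w \<le> B w"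
      unfolding B_def using small_pointwise[OF _ f n fn] by auto
  qed
  have AE1: "AE w in ?M. 1 \<le> ratio n f w"
    using AE_nonneg[of n]
  proof (rule AE_mp)
    show "AE w in ?M. (\<forall>e\<in>edges n. 0 \<le> w e) \<longrightarrow> 1 \<le> ratio n f w"
      using ratio_ge1(1)[OF _ f n] by auto
  qed
  have intI: "\<And>e. e \<in> edges n \<Longrightarrow> integrable ?M (\<lambda>w. indicator {..<f} (w e) :: real)"
    using ind_integral(1)[OF _ f0] by simp
  have intB: "integrable ?M B" unfolding B_def using intI
    by (intro Bochner_Integration.integrable_add Bochner_Integration.integrable_mult_right Bochner_Integration.integrable_sum) auto
  have IB: "integral\<^sup>L ?M B \<le> 1 + real n ^ 3 * f"
  proof -
    have "integral\<^sup>L ?M (\<lambda>w. \<Sum>e\<in>edges n. indicator {..<f} (w e) :: real) = (\<Sum>e\<in>edges n. integral\<^sup>L ?M (\<lambda>w. indicator {..<f} (w e) :: real))"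
      using intI by (rule Bochner_Integration.integral_sum)
    also have "\<dots> \<le> (\<Sum>e\<in>edges n. f)" using ind_integral(2)[OF _ f0] by (intro sum_mono) auto
    also have "\<dots> = real (card (edges n)) * f" by simp
    also have "\<dots> \<le> real n ^ 2 * f"
    proof -
      have "real (card (edges n)) \<le> real n ^ 2" using card_edges_le[of n] by (simp add: power2_eq_square flip: of_nat_mult)
      then show ?thesis using f0 by (intro mult_right_mono) auto
    qed
    finally have s: "integral\<^sup>L ?M (\<lambda>w. \<Sum>e\<in>edges n. indicator {..<f} (w e) :: real) \<le> real n ^ 2 * f" .
    have "integral\<^sup>L ?M B = 1 + real n * integral\<^sup>L ?M (\<lambda>w. \<Sum>e\<in>edges n. indicator {..<f} (w e) :: real)"
      unfolding B_def using intI
      by (subst Bochner_Integration.integral_add) (auto simp: prob_space)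
    also have "\<dots> \<le> 1 + real n * (real n ^ 2 * f)" using s by (simp add: mult_left_mono)
    also have "\<dots> = 1 + real n ^ 3 * f" by (simp add: power3_eq_cube power2_eq_square)
    finally show ?thesis .
  qed
  show int: "integrable ?M (ratio n f)"
  proof (rule Bochner_Integration.integrable_bound[OF intB ratio_meas])
    show "AE w in ?M. norm (ratio n f w) \<le> norm (B w)"
      using AEB AE1 by eventually_elim auto
  qed
  have "integral\<^sup>L ?M (ratio n f) \<le> integral\<^sup>L ?M B"
    by (rule integral_mono_AE[OF int intB AEB])
  then show "integral\<^sup>L ?M (ratio n f) \<le> 1 + real n ^ 3 * f" using IB by linarith
  have "integral\<^sup>L ?M (\<lambda>w. 1) \<le> integral\<^sup>L ?M (ratio n f)"
    by (rule integral_mono_AE[OF _ int AE1]) simp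
  then show "1 \<le> integral\<^sup>L ?M (ratio n f)" by (simp add: prob_space)
qed


theorem corollary2:
  fixes f :: "nat \<Rightarrow> real"
  assumes fpos: "\<And>n. f n > 0"
    and kappa_lin: "(\<lambda>n. real (kappa (f n) n)) \<in> \<Theta>(\<lambda>n. real n)"
  shows "(\<forall>\<^sub>F n in at_top. integrable (rsp_space n) (ratio n (f n)))
    \<and> (\<lambda>n. integral\<^sup>L (rsp_space n) (ratio n (f n)))
        \<in> O(\<lambda>n. 1 + root 4 (ln (real n) * real n ^ 3 * f n ^ 3))
    \<and> (f \<in> O(\<lambda>n. 1 / (real n * root 3 (ln (real n))))
        \<longrightarrow> (\<lambda>n. integral\<^sup>L (rsp_space n) (ratio n (f n))) \<in> O(\<lambda>_. 1))
    \<and> (f \<in> o(\<lambda>n. 1 / real n ^ 3)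
        \<longrightarrow> (\<lambda>n. integral\<^sup>L (rsp_space n) (ratio n (f n))) \<longlonglongrightarrow> 1)"
proof -
  define I where "I n = integral\<^sup>L (rsp_space n) (ratio n (f n))" for n
  have om: "(\<lambda>n. real (kappa (f n) n)) \<in> \<Omega>(\<lambda>n. real n)" using kappa_lin by (rule bigthetaD2)
  then obtain c where c: "c > 0" and ev: "eventually (\<lambda>n. norm (real (kappa (f n) n)) \<ge> c * norm (real n)) at_top"
    by (elim landau_omega.bigE)
  have ev2: "eventually (\<lambda>n. 2 \<le> c * real n) at_top"
  proof -
    have "eventually (\<lambda>n::nat. real n \<ge> 2 / c) at_top"
      by (rule eventually_ge_at_top[THEN eventually_mono[where P="\<lambda>n. nat \<lceil>2/c\<rceil> \<le> n"]]) linarith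
    then show ?thesis by eventually_elim (use c in \<open>simp add: field_simps\<close>)
  qed
  have evb: "eventually (\<lambda>n. integrable (rsp_space n) (ratio n (f n)) \<and> I n \<le> 128 / c + 55296 \<and> 1 \<le> I n) at_top"
    using ev ev2
  proof eventually_elim
    case (elim n)
    have kc: "c * real n \<le> real (kappa (f n) n)" using elim(1) by simp
    show ?case unfolding I_def using main_bound[OF fpos c kc elim(2)] by auto
  qed
  have A: "\<forall>\<^sub>F n in at_top. integrable (rsp_space n) (ratio n (f n))"
    using evb by eventually_elim auto
  define K where "K = 128 / c + 55296"
  have O1: "I \<in> O(\<lambda>_. 1)"
  proof (rule bigoI[where c=K])
    show "\<forall>\<^sub>F n in at_top. norm (I n) \<le> K * norm (1::real)"
      using evb by eventually_elim (auto simp: K_def)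
  qed
  have O2: "I \<in> O(\<lambda>n. 1 + root 4 (ln (real n) * real n ^ 3 * f n ^ 3))"
  proof (rule bigoI[where c=K])
    have ev1: "eventually (\<lambda>n::nat. 1 \<le> n) at_top" by (rule eventually_ge_at_top)
    show "\<forall>\<^sub>F n in at_top. norm (I n) \<le> K * norm (1 + root 4 (ln (real n) * real n ^ 3 * f n ^ 3))"
      using evb ev1
    proof eventually_elim
      case (elim n)
      have "0 \<le> ln (real n) * real n ^ 3 * f n ^ 3"
        using elim(2) fpos[of n] by (intro mult_nonneg_nonneg) auto
      then have r: "0 \<le> root 4 (ln (real n) * real n ^ 3 * f n ^ 3)" by simp
      have K0: "0 \<le> K" unfolding K_def using c by simp
      have "norm (I n) \<le> K" using elim(1) unfolding K_def by simp
      also have "\<dots> = K * 1" by simp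
      also have "\<dots> \<le> K * norm (1 + root 4 (ln (real n) * real n ^ 3 * f n ^ 3))"
        using r K0 by (intro mult_left_mono) auto
      finally show ?case .
    qed
  qed
  have T: "f \<in> o(\<lambda>n. 1 / real n ^ 3) \<longrightarrow> I \<longlonglongrightarrow> 1"
  proof
    assume so: "f \<in> o(\<lambda>n. 1 / real n ^ 3)"
    have t0: "(\<lambda>n. f n / (1 / real n ^ 3)) \<longlonglongrightarrow> 0" using smalloD_tendsto[OF so] .
    have t1: "(\<lambda>n. real n ^ 3 * f n) \<longlonglongrightarrow> 0"
    proof (rule Lim_transform_eventually[OF t0])
      show "\<forall>\<^sub>F n in sequentially. f n / (1 / real n ^ 3) = real n ^ 3 * f n"
        using eventually_ge_at_top[of "1::nat"] by eventually_elim (simp add: field_simps)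
    qed
    have t2: "(\<lambda>n. 1 + real n ^ 3 * f n) \<longlonglongrightarrow> 1"
      using tendsto_add[OF tendsto_const[of 1] t1] by simp
    have evs: "eventually (\<lambda>n. real n ^ 3 * f n < 1) sequentially"
      using t1 by (rule order_tendstoD) simp
    have evI: "eventually (\<lambda>n. 1 \<le> I n \<and> I n \<le> 1 + real n ^ 3 * f n) sequentially"
      using evs eventually_ge_at_top[of "1::nat"]
    proof eventually_elim
      case (elim n)
      have n1: "1 \<le> n" using elim(2) .
      have "f n * real n \<le> real n ^ 3 * f n"
      proof -
        have r1: "1 \<le> real n" using n1 by simp
        then have "real n * 1 \<le> real n * real n" by (intro mult_left_mono) auto
        then have "1 \<le> real n * real n" using r1 by linarith
        then have "real n * 1 \<le> real n * (real n * real n)" using r1 by (intro mult_left_mono) auto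
        then have "real n \<le> real n ^ 3" by (simp add: power3_eq_cube mult.assoc)
        then show ?thesis using fpos[of n] by (simp add: mult.commute mult_left_mono)
      qed
      then have fn: "f n * real n < 1" using elim(1) by linarith
      show ?case unfolding I_def using small_bound[OF fpos n1 fn] by simp
    qed
    show "I \<longlonglongrightarrow> 1"
    proof (rule tendsto_sandwich[of "\<lambda>_. 1" I sequentially "\<lambda>n. 1 + real n ^ 3 * f n"])
      show "\<forall>\<^sub>F n in sequentially. 1 \<le> I n" using evI by eventually_elim auto
      show "\<forall>\<^sub>F n in sequentially. I n \<le> 1 + real n ^ 3 * f n" using evI by eventually_elim auto
    qed (use t2 in auto)
  qed
  show ?thesis using A O1 O2 T unfolding I_def by auto
qed

end
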